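(* Let $d\geq 2$ and let $U=(u_{ij})\in\mathcal{U}_d(\mathbb{C})$ be such that there exists $M\in\mathbb{N}$ for which $(P_U^TP_U)^M$ has all entries non-zero. Let $\mathcal{F}_A=\mathcal{DU}_d(\mathbb{C})$ and $\mathcal{F}_B=\{U^\dagger DU: D\in\mathcal{DU}_d(\mathbb{C})\}$. Then every unitary matrix $V\in\mathcal{U}_d(\mathbb{C})$ can be written as a finite product of matrices each belonging to $\mathcal{F}_A$ or to $\mathcal{F}_B$.
   Context: $\mathcal{U}_d(\mathbb{C})$ denotes the group of $d\times d$ unitary matrices and $\mathcal{DU}_d(\mathbb{C})$ its subgroup of diagonal unitary matrices. $P_U=(p_{ij})$ is the $0/1$ matrix with $p_{ij}=0$ if $u_{ij}=0$ and $p_{ij}=1$ if $u_{ij}\neq 0$. *)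

theory Defs
  imports "HOL-Analysis.Analysis"
begin

definition ctrans :: "complex ^'n ^'m \<Rightarrow> complex ^'m ^'n" where
  "ctrans A = (\<chi> i j. cnj (A $ j $ i))"

definition unitary :: "complex ^'n ^'n \<Rightarrow> bool" where
  "unitary U \<longleftrightarrow> ctrans U ** U = mat 1 \<and> U ** ctrans U = mat 1"

definition diag_unitary :: "complex ^'n ^'n \<Rightarrow> bool" where
  "diag_unitary D \<longleftrightarrow> unitary D \<and> (\<forall>i j. i \<noteq> j \<longrightarrow> D $ i $ j = 0)"

definition pattern :: "complex ^'n ^'m \<Rightarrow> nat ^'n ^'m" where
  "pattern U = (\<chi> i j. if U $ i $ j = 0 then 0 else 1)"

primrec matpow :: "'a::semiring_1 ^'n ^'n \<Rightarrow> nat \<Rightarrow> 'a ^'n ^'n" where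
  "matpow A 0 = mat 1"
| "matpow A (Suc k) = A ** matpow A k"

definition list_matprod :: "(complex ^'n ^'n) list \<Rightarrow> complex ^'n ^'n" where
  "list_matprod Ms = foldr (**) Ms (mat 1)"

end

theory Submission
  imports Defs
begin

definition cs :: "complex \<Rightarrow> complex^'n^'m \<Rightarrow> complex^'n^'m" where
  "cs c A = (\<chi> i j. c * A$i$j)"

definition Emat :: "'n \<Rightarrow> 'n \<Rightarrow> complex^'n^'n" where
  "Emat j k = (\<chi> a b. if a = j \<and> b = k then 1 else 0)"

lemma mm_nth: "(A ** B) $ i $ j = (\<Sum>k\<in>UNIV. A$i$k * B$k$j)"
  by (simp add: matrix_matrix_mult_def)

lemma ctrans_nth[simp]: "ctrans A $ i $ j = cnj (A $ j $ i)"
  by (simp add: ctrans_def)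

lemma cs_nth[simp]: "cs c A $ i $ j = c * A $ i $ j"
  by (simp add: cs_def)

lemma Emat_nth[simp]: "Emat j k $ a $ b = (if a = j \<and> b = k then 1 else 0)"
  by (simp add: Emat_def)

lemma mat_nth: "mat x $ i $ j = (if i = j then x else 0)"
  by (simp add: mat_def)

lemma ctrans_ctrans[simp]: "ctrans (ctrans A) = A"
  by (simp add: vec_eq_iff)

lemma ctrans_mult: "ctrans (A ** B) = ctrans B ** ctrans A"
  by (simp add: vec_eq_iff mm_nth mult.commute)

lemma ctrans_add: "ctrans (A + B) = ctrans A + ctrans B"
  by (simp add: vec_eq_iff)

lemma ctrans_diff: "ctrans (A - B) = ctrans A - ctrans B"
  by (simp add: vec_eq_iff)

lemma ctrans_mat1[simp]: "ctrans (mat 1 :: complex^'n^'n) = mat 1"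
  by (simp add: vec_eq_iff mat_nth)

lemma ctrans_cs: "ctrans (cs c A) = cs (cnj c) (ctrans A)"
  by (simp add: vec_eq_iff)

lemma ctrans_scaleR: "ctrans (r *\<^sub>R A) = r *\<^sub>R ctrans A"
  by (simp add: vec_eq_iff complex_cnj_scaleR)

lemma cs_mult_left: "cs c A ** B = cs c (A ** B)"
  by (simp add: vec_eq_iff mm_nth sum_distrib_left mult.assoc)

lemma cs_mult_right: "A ** cs c B = cs c (A ** B)"
  by (simp add: vec_eq_iff mm_nth sum_distrib_left algebra_simps)

lemma cs_add: "cs c (A + B) = cs c A + cs c B"
  by (simp add: vec_eq_iff algebra_simps)

lemma cs_diff: "cs c (A - B) = cs c A - cs c B"
  by (simp add: vec_eq_iff algebra_simps)

lemma cs_add_scal: "cs (c + d) A = cs c A + cs d A"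
  by (simp add: vec_eq_iff algebra_simps)

lemma cs_cs: "cs c (cs d A) = cs (c * d) A"
  by (simp add: vec_eq_iff algebra_simps)

lemma cs_one[simp]: "cs 1 A = A"
  by (simp add: vec_eq_iff)

lemma cs_zero[simp]: "cs 0 A = 0"
  by (simp add: vec_eq_iff)

lemma cs_zero_right[simp]: "cs c 0 = 0"
  by (simp add: vec_eq_iff)

lemma cs_of_real: "cs (complex_of_real r) A = r *\<^sub>R A"
  unfolding vec_eq_iff by (auto simp: scaleR_conv_of_real[where 'a=complex])

lemma scaleR_mult_left: "(r *\<^sub>R A) ** (B::complex^'n^'m) = r *\<^sub>R (A ** B)"
  by (simp add: vec_eq_iff mm_nth scaleR_sum_right)

lemma scaleR_mult_right: "(A::complex^'n^'m) ** (r *\<^sub>R B) = r *\<^sub>R (A ** B)"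
  by (simp add: vec_eq_iff mm_nth scaleR_sum_right)

lemma mm_zero_left[simp]: "(0::complex^'n^'m) ** B = 0"
  by (simp add: vec_eq_iff mm_nth)

lemma mm_zero_right[simp]: "(A::complex^'n^'m) ** 0 = 0"
  by (simp add: vec_eq_iff mm_nth)

lemma matrix_add_rdistrib: "((A::complex^'n^'m) + B) ** C = A ** C + B ** C"
  by (simp add: vec_eq_iff mm_nth algebra_simps sum.distrib)

lemma mult_diff_left: "((A::complex^'n^'m) - B) ** C = A ** C - B ** C"
  by (simp add: vec_eq_iff mm_nth algebra_simps sum_subtractf)

lemma mult_diff_right: "(A::complex^'n^'m) ** (B - C) = A ** B - A ** C"
  by (simp add: vec_eq_iff mm_nth algebra_simps sum_subtractf)

lemma bilinear_mm: "bilinear ((**) :: complex^'n^'m \<Rightarrow> complex^'k^'n \<Rightarrow> complex^'k^'m)"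
  unfolding bilinear_def
  by (auto intro!: linearI simp: matrix_add_ldistrib matrix_add_rdistrib scaleR_mult_left scaleR_mult_right)

lemma bb_mm: "bounded_bilinear ((**) :: complex^'n^'m \<Rightarrow> complex^'k^'n \<Rightarrow> complex^'k^'m)"
  using bilinear_mm bilinear_conv_bounded_bilinear by blast

lemma unitary_mult: "unitary A \<Longrightarrow> unitary B \<Longrightarrow> unitary (A ** B)"
  unfolding unitary_def ctrans_mult
  by (metis matrix_mul_assoc matrix_mul_lid)

lemma unitary_ctrans: "unitary A \<Longrightarrow> unitary (ctrans A)"
  by (simp add: unitary_def)

lemma unitary_one[simp]: "unitary (mat 1)"
  by (simp add: unitary_def)

lemma list_matprod_Nil[simp]: "list_matprod [] = mat 1"
  by (simp add: list_matprod_def)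

lemma list_matprod_Cons[simp]: "list_matprod (X # Ms) = X ** list_matprod Ms"
  by (simp add: list_matprod_def)

lemma list_matprod_append: "list_matprod (Ms @ Ns) = list_matprod Ms ** list_matprod Ns"
  by (induction Ms) (simp_all add: matrix_mul_assoc)

lemma ctrans_list_matprod: "ctrans (list_matprod Ms) = list_matprod (rev (map ctrans Ms))"
  by (induction Ms) (simp_all add: list_matprod_append ctrans_mult)

definition gen :: "complex^'d^'d \<Rightarrow> complex^'d^'d \<Rightarrow> bool" where
  "gen U X \<longleftrightarrow> diag_unitary X \<or> (\<exists>D. diag_unitary D \<and> X = ctrans U ** D ** U)"

definition inG :: "complex^'d^'d \<Rightarrow> complex^'d^'d \<Rightarrow> bool" where
  "inG U V \<longleftrightarrow> (\<exists>Ms. (\<forall>X\<in>set Ms. gen U X) \<and> V = list_matprod Ms)"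

lemma inG_one: "inG U (mat 1)"
  unfolding inG_def by (rule exI[of _ "[]"]) simp

lemma inG_gen: "gen U X \<Longrightarrow> inG U X"
  unfolding inG_def by (rule exI[of _ "[X]"]) simp

lemma inG_mult: "inG U A \<Longrightarrow> inG U B \<Longrightarrow> inG U (A ** B)"
  unfolding inG_def by (metis Un_iff list_matprod_append set_append)

lemma diag_unitary_ctrans: "diag_unitary D \<Longrightarrow> diag_unitary (ctrans D)"
  unfolding diag_unitary_def by (auto simp: unitary_ctrans)

lemma gen_ctrans: "unitary U \<Longrightarrow> gen U X \<Longrightarrow> gen U (ctrans X)"
proof -
  assume "gen U X"
  then consider "diag_unitary X" | D where "diag_unitary D" "X = ctrans U ** D ** U"
    unfolding gen_def by blast
  then show "gen U (ctrans X)"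
  proof cases
    case 1 then show ?thesis by (simp add: gen_def diag_unitary_ctrans)
  next
    case 2
    then have "ctrans X = ctrans U ** ctrans D ** U"
      by (simp add: ctrans_mult matrix_mul_assoc)
    then show ?thesis using 2 unfolding gen_def by (blast intro: diag_unitary_ctrans)
  qed
qed

lemma inG_ctrans: "unitary U \<Longrightarrow> inG U A \<Longrightarrow> inG U (ctrans A)"
proof -
  assume u: "unitary U" and "inG U A"
  then obtain Ms where "\<forall>X\<in>set Ms. gen U X" "A = list_matprod Ms" unfolding inG_def by blast
  then show ?thesis unfolding inG_def
    by (intro exI[of _ "rev (map ctrans Ms)"]) (auto simp: ctrans_list_matprod gen_ctrans[OF u])
qed

lemma gen_unitary: "unitary U \<Longrightarrow> gen U X \<Longrightarrow> unitary X"
  unfolding gen_def diag_unitary_def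
  by (auto intro!: unitary_mult unitary_ctrans)

lemma inG_unitary: "unitary U \<Longrightarrow> inG U A \<Longrightarrow> unitary A"
proof -
  assume u: "unitary U" and "inG U A"
  then obtain Ms where "\<forall>X\<in>set Ms. gen U X" "A = list_matprod Ms" unfolding inG_def by blast
  then show "unitary A"
  proof (induction Ms arbitrary: A)
    case Nil then show ?case by simp
  next
    case (Cons a Ms)
    then have "unitary a" "unitary (list_matprod Ms)" using gen_unitary[OF u] by auto
    then show ?case using Cons.prems(2) unitary_mult by simp
  qed
qed

lemma inG_list: "(\<forall>X\<in>set Ms. inG U X) \<Longrightarrow> inG U (list_matprod Ms)"
  by (induction Ms) (auto intro: inG_one inG_mult)

lemma unitary_D: "unitary A \<Longrightarrow> ctrans A ** A = mat 1"  "unitary A \<Longrightarrow> A ** ctrans A = mat 1"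
  by (auto simp: unitary_def)

definition Rm :: "complex^'d^'d \<Rightarrow> complex \<Rightarrow> complex^'d^'d" where
  "Rm P l = mat 1 + cs (l - 1) P"

definition diagm :: "('d \<Rightarrow> complex) \<Rightarrow> complex^'d^'d" where
  "diagm f = (\<chi> i j. if i = j then f i else 0)"

lemma sum_if_eq1: fixes a g :: "'n::finite \<Rightarrow> complex" shows "(\<Sum>k\<in>UNIV. (if i = k then a k else 0) * g k) = a i * (g i :: complex)"
proof -
  have "(\<Sum>k\<in>UNIV. (if i = k then a k else 0) * g k) = (\<Sum>k\<in>UNIV. if k = i then a k * g k else 0)"
    by (rule sum.cong) auto
  then show ?thesis by simp
qed

lemma sum_if_eq2: fixes a g :: "'n::finite \<Rightarrow> complex" shows "(\<Sum>k\<in>UNIV. g k * (if k = j then a k else 0)) = (g j :: complex) * a j"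
proof -
  have "(\<Sum>k\<in>UNIV. g k * (if k = j then a k else 0)) = (\<Sum>k\<in>UNIV. if k = j then g k * a k else 0)"
    by (rule sum.cong) auto
  then show ?thesis by simp
qed

lemma diagm_mult_left: "(diagm f ** X) $ i $ j = f i * X $ i $ j"
  by (simp add: mm_nth diagm_def sum_if_eq1)

lemma diagm_mult_right: "(X ** diagm f) $ i $ j = X $ i $ j * f j"
  by (simp add: mm_nth diagm_def sum_if_eq2)

lemma ctrans_diagm: "ctrans (diagm f) = diagm (\<lambda>i. cnj (f i))"
  by (simp add: vec_eq_iff diagm_def)

lemma cnj_mult_unit: "cmod z = 1 \<Longrightarrow> cnj z * z = 1"
proof -
  assume "cmod z = 1"
  moreover have "cnj z * z = of_real ((cmod z)^2)" using complex_norm_square[of z] by (simp add: mult.commute)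
  ultimately show ?thesis by simp
qed

lemma mult_cnj_unit: "cmod z = 1 \<Longrightarrow> z * cnj z = 1"
  using cnj_mult_unit by (simp add: mult.commute)

lemma diag_unitary_diagm: "(\<And>i. cmod (f i) = 1) \<Longrightarrow> diag_unitary (diagm f)"
  unfolding diag_unitary_def unitary_def ctrans_diagm
  by (auto simp: vec_eq_iff diagm_mult_left mat_nth)
     (auto simp: diagm_def cnj_mult_unit mult_cnj_unit)

lemma Emat_mult_left: "(Emat j k ** X) $ a $ b = (if a = j then X $ k $ b else 0)"
proof -
  have "(\<Sum>c\<in>UNIV. (if c = k then 1 else 0) * X $ c $ b) = X $ k $ b"
    using sum_if_eq1[of k "\<lambda>_. 1" "\<lambda>c. X $ c $ b"] by (simp add: eq_commute)
  then show ?thesis by (simp add: mm_nth)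
qed

lemma Emat_mult_right: "(X ** Emat j k) $ a $ b = (if b = k then X $ a $ j else 0)"
proof -
  have "(\<Sum>c\<in>UNIV. X $ a $ c * (if c = j then 1 else 0)) = X $ a $ j"
    using sum_if_eq2[of "\<lambda>c. X $ a $ c" j "\<lambda>_. 1"] by simp
  then show ?thesis by (simp add: mm_nth)
qed


definition Sset :: "complex^'d^'d \<Rightarrow> (complex^'d^'d) set" where
  "Sset U = {g ** P ** ctrans g | g P. inG U g \<and> (\<exists>j. P = Emat j j \<or> P = ctrans U ** Emat j j ** U)}"

definition brk :: "complex^'d^'d \<Rightarrow> complex^'d^'d \<Rightarrow> complex^'d^'d" where
  "brk Y X = cs \<i> (Y ** X - X ** Y)"

lemma Rm_conj: "unitary g \<Longrightarrow> g ** Rm P l ** ctrans g = Rm (g ** P ** ctrans g) l"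
  unfolding Rm_def
  by (simp add: matrix_add_ldistrib matrix_add_rdistrib cs_mult_left cs_mult_right unitary_D)

lemma Rm_Emat: "Rm (Emat j j) l = diagm (\<lambda>i. if i = j then l else 1)"
  by (auto simp: Rm_def vec_eq_iff diagm_def mat_nth)

lemma diag_Rm_Emat: "cmod l = 1 \<Longrightarrow> diag_unitary (Rm (Emat j j) l)"
  unfolding Rm_Emat by (rule diag_unitary_diagm) auto

lemma inG_Rm_S:
  assumes u: "unitary U" and P: "P \<in> Sset U" and l: "cmod l = 1"
  shows "inG U (Rm P l)"
proof -
  obtain g Q j where g: "inG U g" and PQ: "P = g ** Q ** ctrans g"
    and Q: "Q = Emat j j \<or> Q = ctrans U ** Emat j j ** U"
    using P unfolding Sset_def by blast
  have gu: "unitary g" using inG_unitary[OF u g] .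
  have RQ: "inG U (Rm Q l)"
    using Q
  proof
    assume "Q = Emat j j"
    then show ?thesis using diag_Rm_Emat[OF l] by (auto simp: gen_def intro!: inG_gen)
  next
    assume Q2: "Q = ctrans U ** Emat j j ** U"
    have "Rm Q l = ctrans U ** Rm (Emat j j) l ** U"
      using Rm_conj[OF unitary_ctrans[OF u], of "Emat j j" l] Q2 by simp
    then have "gen U (Rm Q l)" using diag_Rm_Emat[OF l] unfolding gen_def by blast
    then show ?thesis by (rule inG_gen)
  qed
  have "Rm P l = g ** Rm Q l ** ctrans g" using Rm_conj[OF gu] PQ by simp
  then show ?thesis using RQ g inG_ctrans[OF u g] by (simp add: inG_mult)
qed

lemma Herm_Emat: "ctrans (Emat j j) = Emat j j"
  by (auto simp: vec_eq_iff)

lemma Herm_conj: "ctrans Q = Q \<Longrightarrow> ctrans (g ** Q ** ctrans g) = g ** Q ** ctrans g"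
  by (simp add: ctrans_mult matrix_mul_assoc)

lemma Herm_S: "P \<in> Sset U \<Longrightarrow> ctrans P = P"
  unfolding Sset_def
  by (auto intro!: Herm_conj simp: Herm_Emat)
     (metis Herm_Emat Herm_conj ctrans_ctrans)

lemma ctrans_Rm: "ctrans P = P \<Longrightarrow> ctrans (Rm P l) = Rm P (cnj l)"
  by (simp add: Rm_def ctrans_add ctrans_cs)

lemma Rm_expand:
  "Rm P l ** X ** Rm P m = X + cs (l - 1) (P ** X) + cs (m - 1) (X ** P) + cs ((l - 1) * (m - 1)) (P ** X ** P)"
  unfolding Rm_def
  by (simp add: matrix_add_ldistrib matrix_add_rdistrib cs_mult_left cs_mult_right cs_cs cs_add mult.commute)

lemma brk_formula:
  "brk P X = (Rm P \<i> ** X ** Rm P (-\<i>) - X) - (1/2) *\<^sub>R (Rm P (-1) ** X ** Rm P (-1) - X)"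
  unfolding Rm_expand brk_def cs_of_real[symmetric]
  by (simp add: vec_eq_iff algebra_simps)


lemma linear_conj: "linear (\<lambda>X. g ** (X::complex^'d^'d) ** ctrans g)"
  by (rule linearI) (simp_all add: matrix_add_ldistrib matrix_add_rdistrib scaleR_mult_left scaleR_mult_right)

lemma span_conj:
  assumes g: "inG U g" and X: "X \<in> span (Sset U)"
  shows "g ** X ** ctrans g \<in> span (Sset U)"
proof -
  let ?f = "\<lambda>X. g ** X ** ctrans g"
  have sub: "?f ` Sset U \<subseteq> Sset U"
  proof
    fix Y assume "Y \<in> ?f ` Sset U"
    then obtain h P j where Y: "Y = g ** (h ** P ** ctrans h) ** ctrans g" and h: "inG U h"
      and P: "P = Emat j j \<or> P = ctrans U ** Emat j j ** U"
      unfolding Sset_def by blast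
    have "Y = (g ** h) ** P ** ctrans (g ** h)"
      using Y by (simp add: ctrans_mult matrix_mul_assoc)
    then show "Y \<in> Sset U" unfolding Sset_def using inG_mult[OF g h] P by blast
  qed
  have "?f X \<in> ?f ` span (Sset U)" using X by blast
  also have "\<dots> = span (?f ` Sset U)" using span_linear_image[OF linear_conj] by metis
  also have "\<dots> \<subseteq> span (Sset U)" using span_mono[OF sub] .
  finally show ?thesis .
qed

lemma brk_S:
  assumes u: "unitary U" and P: "P \<in> Sset U" and X: "X \<in> span (Sset U)"
  shows "brk P X \<in> span (Sset U)"
proof -
  have h: "ctrans P = P" using Herm_S[OF P] .
  have a: "Rm P (-\<i>) = ctrans (Rm P \<i>)" using ctrans_Rm[OF h, of "\<i>"] by simp
  have b: "Rm P (-1) = ctrans (Rm P (-1))" using ctrans_Rm[OF h, of "-1"] by simp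
  have g1: "inG U (Rm P \<i>)" by (rule inG_Rm_S[OF u P]) simp
  have g2: "inG U (Rm P (-1))" by (rule inG_Rm_S[OF u P]) simp
  have "Rm P \<i> ** X ** Rm P (-\<i>) \<in> span (Sset U)"
    unfolding a by (rule span_conj[OF g1 X])
  moreover have "Rm P (-1) ** X ** Rm P (-1) \<in> span (Sset U)"
    using span_conj[OF g2 X] b by metis
  ultimately show ?thesis unfolding brk_formula
    by (intro span_diff span_scale X)
qed

lemma brk_0[simp]: "brk 0 X = 0"
  by (simp add: brk_def)

lemma brk_add: "brk (A + B) X = brk A X + brk B X"
  by (simp add: brk_def matrix_add_ldistrib matrix_add_rdistrib cs_add[symmetric] algebra_simps)

lemma brk_scaleR: "brk (r *\<^sub>R A) X = r *\<^sub>R brk A X"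
  unfolding brk_def scaleR_mult_left scaleR_mult_right cs_of_real[symmetric] cs_mult_left cs_mult_right cs_diff[symmetric] cs_cs
  by (simp add: mult.commute)

lemma brk_span:
  assumes u: "unitary U" and Y: "Y \<in> span (Sset U)" and X: "X \<in> span (Sset U)"
  shows "brk Y X \<in> span (Sset U)"
proof -
  have "\<forall>X\<in>span (Sset U). brk Y X \<in> span (Sset U)"
  proof (rule span_induct[OF Y, where P="\<lambda>Y. \<forall>X\<in>span (Sset U). brk Y X \<in> span (Sset U)"])
    show "subspace {Y. \<forall>X\<in>span (Sset U). brk Y X \<in> span (Sset U)}"
      unfolding subspace_def by (auto simp: brk_add brk_scaleR span_add span_scale span_zero)
  next
    fix P assume "P \<in> Sset U"
    then show "\<forall>X\<in>span (Sset U). brk P X \<in> span (Sset U)"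
      using brk_S[OF u] by blast
  qed
  then show ?thesis using X by blast
qed

definition Hm :: "'d \<Rightarrow> 'd \<Rightarrow> complex \<Rightarrow> complex^'d^'d" where
  "Hm j k z = cs z (Emat j k) + cs (cnj z) (Emat k j)"

definition conn :: "complex^'d^'d \<Rightarrow> 'd \<Rightarrow> 'd \<Rightarrow> bool" where
  "conn U j k \<longleftrightarrow> j \<noteq> k \<and> (\<exists>X\<in>span (Sset U). X $ j $ k \<noteq> 0)"

lemma brk_nth: "brk Y X $ a $ b = \<i> * ((Y ** X) $ a $ b - (X ** Y) $ a $ b)"
  by (simp add: brk_def)

lemma Hm_nth: "Hm j k z $ a $ b = (if a = j \<and> b = k then z else 0) + (if a = k \<and> b = j then cnj z else 0)"
  unfolding Hm_def vector_add_component cs_nth Emat_nth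
  by (simp only: if_distrib[of "\<lambda>x. z * x"] if_distrib[of "\<lambda>x. cnj z * x"] mult_1_right mult_zero_right)

lemma sum_if_mult: fixes g :: "'n::finite \<Rightarrow> complex"
  shows "(\<Sum>k\<in>UNIV. (if k = i then a else 0) * g k) = a * g i"
proof -
  have "(\<Sum>k\<in>UNIV. (if k = i then a else 0) * g k) = (\<Sum>k\<in>UNIV. if k = i then a * g k else 0)"
    by (rule sum.cong) auto
  then show ?thesis by simp
qed

lemma ctrans_zero: "ctrans 0 = 0"
  by (simp add: vec_eq_iff)

lemma span_herm: "X \<in> span (Sset U) \<Longrightarrow> ctrans X = X"
proof -
  assume X: "X \<in> span (Sset U)"
  show ?thesis
  proof (rule span_induct[OF X, where P="\<lambda>X. ctrans X = X"])
    show "subspace {X. ctrans X = X}"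
      unfolding subspace_def by (auto simp: ctrans_add ctrans_scaleR ctrans_zero)
  next
    fix P assume "P \<in> Sset U" then show "ctrans P = P" by (rule Herm_S)
  qed
qed

lemma Emat_S: "Emat j j \<in> Sset U"
  unfolding Sset_def using inG_one[of U] by force

lemma UE_S: "ctrans U ** Emat j j ** U \<in> Sset U"
  unfolding Sset_def using inG_one[of U] by force

lemma comp_lemma: assumes jk: "j \<noteq> k"
  shows "brk (Emat k k) (brk (Emat j j) X) = cs (X$j$k) (Emat j k) + cs (X$k$j) (Emat k j)"
proof (unfold vec_eq_iff, intro allI)
  fix a b
  show "brk (Emat k k) (brk (Emat j j) X) $ a $ b = (cs (X$j$k) (Emat j k) + cs (X$k$j) (Emat k j)) $ a $ b"
    unfolding brk_nth Emat_mult_left Emat_mult_right vector_add_component cs_nth Emat_nth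
    using jk by (cases "a = j"; cases "a = k"; cases "b = j"; cases "b = k"; simp)
qed

lemma brk_Hm: assumes jk: "j \<noteq> k" shows "brk (Emat j j) (Hm j k c) = Hm j k (\<i> * c)"
proof (unfold vec_eq_iff, intro allI)
  fix a b
  show "brk (Emat j j) (Hm j k c) $ a $ b = Hm j k (\<i> * c) $ a $ b"
    unfolding brk_nth Emat_mult_left Emat_mult_right Hm_nth
    using jk by (cases "a = j"; cases "a = k"; cases "b = j"; cases "b = k"; simp)
qed

lemma re_im_mult: "complex_of_real (Re w) * c + complex_of_real (Im w) * (\<i> * c) = w * c"
proof -
  have "w = complex_of_real (Re w) + \<i> * complex_of_real (Im w)" by (simp add: complex_eq_iff)
  then show ?thesis by (metis (no_types, lifting) distrib_right mult.assoc mult.left_commute)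
qed

lemma scaleR_nth2: "(r *\<^sub>R (M::complex^'n^'m)) $ a $ b = complex_of_real r * M $ a $ b"
  by (simp only: vector_scaleR_component) (simp add: scaleR_conv_of_real)

lemma if_lin_aux:
  fixes x1 x2 c1 c2 d1 d2 r s :: complex
  assumes "x1 = r*c1 + s*d1" "x2 = r*c2 + s*d2"
  shows "(if P then x1 else 0) + (if Q then x2 else 0) =
    r * ((if P then c1 else 0) + (if Q then c2 else 0)) + s * ((if P then d1 else 0) + (if Q then d2 else 0))"
  using assms by (cases P; cases Q) (simp_all add: algebra_simps)

lemma Hm_decomp:
  assumes c: "c \<noteq> 0"
  shows "Hm j k z = Re (z / c) *\<^sub>R Hm j k c + Im (z / c) *\<^sub>R Hm j k (\<i> * c)"
proof -
  have e1: "z = complex_of_real (Re (z/c)) * c + complex_of_real (Im (z/c)) * (\<i> * c)"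
    using re_im_mult[of "z/c" c] c by simp
  have e2: "cnj z = complex_of_real (Re (z/c)) * cnj c + complex_of_real (Im (z/c)) * cnj (\<i> * c)"
    using arg_cong[OF e1, of cnj] by simp
  show ?thesis
  proof (unfold vec_eq_iff, intro allI)
    fix a b
    show "Hm j k z $ a $ b = (Re (z / c) *\<^sub>R Hm j k c + Im (z / c) *\<^sub>R Hm j k (\<i> * c)) $ a $ b"
      unfolding vector_add_component scaleR_nth2 Hm_nth
      by (rule if_lin_aux[OF e1 e2])
  qed
qed

lemma span_S_base: "P \<in> Sset U \<Longrightarrow> P \<in> span (Sset U)"
  by (rule span_base)

lemma conn_H:
  assumes u: "unitary U" and c: "conn U j k"
  shows "Hm j k z \<in> span (Sset U)"
proof -
  obtain X where X: "X \<in> span (Sset U)" and Xjk: "X $ j $ k \<noteq> 0" and jk: "j \<noteq> k"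
    using c unfolding conn_def by blast
  have "ctrans X $ k $ j = X $ k $ j" using span_herm[OF X] by simp
  then have h: "X $ k $ j = cnj (X $ j $ k)" by simp
  have Ej: "Emat j j \<in> span (Sset U)" "Emat k k \<in> span (Sset U)" using Emat_S span_base by blast+
  have "brk (Emat k k) (brk (Emat j j) X) \<in> span (Sset U)"
    by (intro brk_span[OF u] Ej X)
  then have A1: "Hm j k (X $ j $ k) \<in> span (Sset U)"
    unfolding comp_lemma[OF jk] h Hm_def .
  have A2: "Hm j k (\<i> * X $ j $ k) \<in> span (Sset U)"
    using brk_span[OF u Ej(1) A1] unfolding brk_Hm[OF jk] .
  show ?thesis
    unfolding Hm_decomp[OF Xjk, of j k z]
    by (intro span_add span_scale A1 A2)
qed

lemma Hm_1: "Hm j k 1 = Emat j k + Emat k j"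
  by (simp add: Hm_def)

lemma conn_trans:
  assumes u: "unitary U" and c1: "conn U j k" and c2: "conn U k l" and jl: "j \<noteq> l"
  shows "conn U j l"
proof -
  have jk: "j \<noteq> k" and kl: "k \<noteq> l" using c1 c2 unfolding conn_def by auto
  have H1: "Hm j k 1 \<in> span (Sset U)" and H2: "Hm k l 1 \<in> span (Sset U)"
    using conn_H[OF u c1] conn_H[OF u c2] by auto
  have Y: "brk (Hm j k 1) (Hm k l 1) \<in> span (Sset U)" by (rule brk_span[OF u H1 H2])
  have "brk (Hm j k 1) (Hm k l 1) $ j $ l = \<i>"
    unfolding brk_nth Hm_1 matrix_add_rdistrib matrix_add_ldistrib vector_add_component
      Emat_mult_left Emat_mult_right Emat_nth
    using jk kl jl by simp
  then show ?thesis using Y jl unfolding conn_def by force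
qed

lemma UEU_nth: "(ctrans U ** Emat i i ** U) $ j $ k = cnj (U $ i $ j) * U $ i $ k"
proof -
  have "(ctrans U ** Emat i i ** U) $ j $ k = (\<Sum>c\<in>UNIV. (if c = i then cnj (U $ i $ j) else 0) * U $ c $ k)"
    unfolding mm_nth[of "ctrans U ** Emat i i"] Emat_mult_right by (rule sum.cong) auto
  also have "\<dots> = cnj (U $ i $ j) * U $ i $ k" by (rule sum_if_mult)
  finally show ?thesis .
qed

lemma edge_conn:
  assumes "U $ i $ j \<noteq> 0" "U $ i $ k \<noteq> 0" "j \<noteq> k"
  shows "conn U j k"
proof -
  have "ctrans U ** Emat i i ** U \<in> span (Sset U)" using UE_S span_base by blast
  moreover have "(ctrans U ** Emat i i ** U) $ j $ k \<noteq> 0" unfolding UEU_nth using assms by simp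
  ultimately show ?thesis using assms(3) unfolding conn_def by blast
qed

lemma pat_prod:
  assumes "(transpose (pattern U) ** pattern U) $ a $ c \<noteq> 0"
  shows "\<exists>i. U $ i $ a \<noteq> 0 \<and> U $ i $ c \<noteq> 0"
proof (rule ccontr)
  assume "\<not> ?thesis"
  then have "\<And>i. transpose (pattern U) $ a $ i * pattern U $ i $ c = 0"
    unfolding transpose_def pattern_def by simp blast
  then have "(transpose (pattern U) ** pattern U) $ a $ c = 0"
    by (simp add: matrix_matrix_mult_def)
  then show False using assms by simp
qed

lemma matpow_conn:
  assumes u: "unitary U"
  shows "matpow (transpose (pattern U) ** pattern U) M $ a $ b \<noteq> 0 \<Longrightarrow> a = b \<or> conn U a b"
proof (induction M arbitrary: a)
  case 0
  then show ?case by (simp add: mat_def split: if_splits)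
next
  case (Suc M)
  let ?A = "transpose (pattern U) ** pattern U"
  have "(\<Sum>c\<in>UNIV. ?A $ a $ c * matpow ?A M $ c $ b) \<noteq> 0"
    using Suc.prems by (simp add: matrix_matrix_mult_def)
  then have "\<exists>c. ?A $ a $ c * matpow ?A M $ c $ b \<noteq> 0"
  proof (rule contrapos_np)
    assume "\<not> (\<exists>c. ?A $ a $ c * matpow ?A M $ c $ b \<noteq> 0)"
    then show "(\<Sum>c\<in>UNIV. ?A $ a $ c * matpow ?A M $ c $ b) = 0" by simp
  qed
  then obtain c where c1: "?A $ a $ c \<noteq> 0" and c2: "matpow ?A M $ c $ b \<noteq> 0"
    by auto
  have ac: "a = c \<or> conn U a c"
    using pat_prod[OF c1] edge_conn by blast
  have cb: "c = b \<or> conn U c b" using Suc.IH[OF c2] .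
  show ?case
  proof (cases "a = b")
    case True then show ?thesis by simp
  next
    case False
    then show ?thesis using ac cb conn_trans[OF u] by blast
  qed
qed

lemma matrix_decomp: "(\<Sum>a\<in>UNIV. \<Sum>b\<in>UNIV. cs (f a b) (Emat a b)) $ x $ y = (f x y :: complex)"
proof -
  have inner: "(\<Sum>b\<in>UNIV. f a b * (if x = a \<and> y = b then 1 else 0)) = (if a = x then f a y else 0)" for a
  proof (cases "a = x")
    case True
    have "(\<Sum>b\<in>UNIV. f a b * (if x = a \<and> y = b then 1 else 0)) = (\<Sum>b\<in>UNIV. if b = y then f a b else 0)"
      using True by (intro sum.cong) auto
    then show ?thesis using True by simp
  next
    case False
    then show ?thesis by simp
  qed
  have "(\<Sum>a\<in>UNIV. \<Sum>b\<in>UNIV. cs (f a b) (Emat a b)) $ x $ y =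
        (\<Sum>a\<in>UNIV. \<Sum>b\<in>UNIV. f a b * (if x = a \<and> y = b then 1 else 0))"
    by (simp add: sum_component)
  also have "\<dots> = (\<Sum>a\<in>UNIV. if a = x then f a y else 0)"
    unfolding inner ..
  also have "\<dots> = f x y" by simp
  finally show ?thesis .
qed

lemma matrix_decomp2: "(\<Sum>a\<in>UNIV. \<Sum>b\<in>UNIV. cs (g a b) (Emat b a)) $ x $ y = (g y x :: complex)"
proof -
  have "(\<Sum>a\<in>UNIV. \<Sum>b\<in>UNIV. cs (g a b) (Emat b a)) = (\<Sum>b\<in>UNIV. \<Sum>a\<in>UNIV. cs (g a b) (Emat b a))"
    by (rule sum.swap)
  then show ?thesis using matrix_decomp[of "\<lambda>b a. g a b" x y] by simp
qed

lemma herm_decomp: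
  assumes h: "ctrans A = A"
  shows "A = (1/2) *\<^sub>R (\<Sum>a\<in>UNIV. \<Sum>b\<in>UNIV. Hm a b (A $ a $ b))"
proof -
  have s1: "(\<Sum>a\<in>UNIV. \<Sum>b\<in>UNIV. Hm a b (A $ a $ b)) =
     (\<Sum>a\<in>UNIV. \<Sum>b\<in>UNIV. cs (A $ a $ b) (Emat a b)) + (\<Sum>a\<in>UNIV. \<Sum>b\<in>UNIV. cs (cnj (A $ a $ b)) (Emat b a))"
    unfolding Hm_def sum.distrib ..
  have "(\<Sum>a\<in>UNIV. \<Sum>b\<in>UNIV. Hm a b (A $ a $ b)) = A + A"
  proof (unfold vec_eq_iff, intro allI)
    fix x y
    have "ctrans A $ x $ y = A $ x $ y" using h by simp
    then show "(\<Sum>a\<in>UNIV. \<Sum>b\<in>UNIV. Hm a b (A $ a $ b)) $ x $ y = (A + A) $ x $ y"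
      unfolding s1 vector_add_component matrix_decomp[of "\<lambda>a b. A $ a $ b"]
        matrix_decomp2[of "\<lambda>a b. cnj (A $ a $ b)"] by simp
  qed
  then show ?thesis by (simp add: scaleR_2[symmetric])
qed

lemma Hm_diag: "Hm a a z = (2 * Re z) *\<^sub>R Emat a a"
  unfolding Hm_def cs_of_real[symmetric] cs_add_scal[symmetric]
  by (simp add: complex_add_cnj)

lemma herm_in_span:
  assumes u: "unitary U" and allc: "\<And>j k. j \<noteq> k \<Longrightarrow> conn U j k" and h: "ctrans A = A"
  shows "A \<in> span (Sset U)"
proof -
  have "Hm a b (A $ a $ b) \<in> span (Sset U)" for a b
  proof (cases "a = b")
    case True
    then have "Hm a b (A $ a $ b) = (2 * Re (A $ a $ b)) *\<^sub>R Emat a a" using Hm_diag by simp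
    moreover have "Emat a a \<in> span (Sset U)" using Emat_S span_base by blast
    ultimately show ?thesis using span_scale by metis
  next
    case False
    then show ?thesis using conn_H[OF u allc] by blast
  qed
  then show ?thesis
    by (subst herm_decomp[OF h]) (intro span_scale span_sum)
qed

definition l1 :: "complex^'n^'m \<Rightarrow> real" where
  "l1 A = (\<Sum>i\<in>UNIV. \<Sum>j\<in>UNIV. cmod (A $ i $ j))"

lemma l1_nonneg: "0 \<le> l1 A"
  unfolding l1_def by (intro sum_nonneg) auto

lemma l1_add: "l1 (A + B) \<le> l1 A + l1 B"
  unfolding l1_def sum.distrib[symmetric]
  by (intro sum_mono) (simp add: norm_triangle_ineq)

lemma l1_uminus: "l1 (- A) = l1 A"
  unfolding l1_def by simp

lemma l1_ctrans: "l1 (ctrans A) = l1 A"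
  unfolding l1_def ctrans_nth complex_mod_cnj by (rule sum.swap)

lemma l1_scaleR: "l1 (r *\<^sub>R A) = \<bar>r\<bar> * l1 A"
  unfolding l1_def by (simp add: sum_distrib_left)

lemma l1_zero: "l1 A = 0 \<Longrightarrow> A = 0"
proof -
  assume "l1 A = 0"
  then have "\<forall>i\<in>UNIV. (\<Sum>j\<in>UNIV. cmod (A $ i $ j)) = 0"
    unfolding l1_def by (subst sum_nonneg_eq_0_iff[symmetric]) (auto intro: sum_nonneg)
  then have "\<forall>i j. cmod (A $ i $ j) = 0"
    by (subst (asm) sum_nonneg_eq_0_iff) auto
  then show "A = 0" by (simp add: vec_eq_iff)
qed

lemma l1_mult: "l1 ((A::complex^'n^'m) ** (B::complex^'k^'n)) \<le> l1 A * l1 B"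
proof -
  have row: "(\<Sum>j\<in>UNIV. cmod (B $ k $ j)) \<le> l1 B" for k
    unfolding l1_def by (rule member_le_sum) (auto intro: sum_nonneg)
  have "l1 (A ** B) \<le> (\<Sum>i\<in>UNIV. \<Sum>j\<in>UNIV. \<Sum>k\<in>UNIV. cmod (A $ i $ k) * cmod (B $ k $ j))"
    unfolding l1_def mm_nth
    by (intro sum_mono) (rule order_trans[OF norm_sum], simp add: norm_mult)
  also have "\<dots> = (\<Sum>i\<in>UNIV. \<Sum>k\<in>UNIV. cmod (A $ i $ k) * (\<Sum>j\<in>UNIV. cmod (B $ k $ j)))"
  proof (rule sum.cong[OF refl])
    fix i
    show "(\<Sum>j\<in>UNIV. \<Sum>k\<in>UNIV. cmod (A $ i $ k) * cmod (B $ k $ j)) =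
      (\<Sum>k\<in>UNIV. cmod (A $ i $ k) * (\<Sum>j\<in>UNIV. cmod (B $ k $ j)))"
      by (subst sum.swap) (simp add: sum_distrib_left)
  qed
  also have "\<dots> \<le> (\<Sum>i\<in>UNIV. \<Sum>k\<in>UNIV. cmod (A $ i $ k) * l1 B)"
    by (intro sum_mono mult_left_mono row) auto
  also have "\<dots> = l1 A * l1 B"
    unfolding l1_def by (simp add: sum_distrib_right)
  finally show ?thesis .
qed


lemma K_trick:
  assumes W: "unitary W" and V: "unitary (W + K)" and h: "ctrans K = K"
    and e: "l1 (W - mat 1) < 1/4" and k: "l1 K < 1/2"
  shows "K = 0"
proof -
  define E where "E = W - mat 1"
  have WE: "W = mat 1 + E" unfolding E_def by simp
  have cWE: "ctrans W = mat 1 + ctrans E" unfolding E_def by (simp add: ctrans_diff)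
  have "ctrans (W + K) ** (W + K) = mat 1" using unitary_D(1)[OF V] .
  then have "ctrans W ** W + (ctrans W ** K + K ** W + K ** K) = mat 1"
    by (simp add: ctrans_add h matrix_add_ldistrib matrix_add_rdistrib algebra_simps)
  then have "ctrans W ** K + K ** W + K ** K = 0"
    using unitary_D(1)[OF W] by simp
  then have "(mat 1 + ctrans E) ** K + K ** (mat 1 + E) + K ** K = 0"
    unfolding WE[symmetric] cWE[symmetric] .
  then have "K + K + (ctrans E ** K + K ** E + K ** K) = 0"
    by (simp add: matrix_add_ldistrib matrix_add_rdistrib algebra_simps)
  then have "K + K = - (ctrans E ** K + K ** E + K ** K)"
    by (simp only: eq_neg_iff_add_eq_0)
  then have eq: "2 *\<^sub>R K = - (ctrans E ** K + K ** E + K ** K)"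
    by (simp only: scaleR_2)
  have "2 * l1 K = l1 (2 *\<^sub>R K)" by (simp add: l1_scaleR)
  also have "\<dots> = l1 (ctrans E ** K + K ** E + K ** K)" unfolding eq l1_uminus ..
  also have "\<dots> \<le> l1 (ctrans E ** K) + l1 (K ** E) + l1 (K ** K)"
    by (meson add_mono l1_add order_trans order_refl)
  also have "\<dots> \<le> l1 E * l1 K + l1 K * l1 E + l1 K * l1 K"
    by (intro add_mono) (auto simp: l1_ctrans[symmetric, of E] intro: l1_mult[THEN order_trans])
  finally have ineq: "2 * l1 K \<le> (2 * l1 E + l1 K) * l1 K" by (simp add: algebra_simps)
  have "l1 K = 0"
  proof (rule ccontr)
    assume "l1 K \<noteq> 0"
    then have kp: "l1 K > 0" using l1_nonneg[of K] by simp
    have "2 * l1 E + l1 K < 1" using e k unfolding E_def by simp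
    then have "(2 * l1 E + l1 K) * l1 K < 1 * l1 K" by (rule mult_strict_right_mono[OF _ kp])
    then show False using ineq kp by simp
  qed
  then show ?thesis by (rule l1_zero)
qed

lemma linear_cs: "linear (\<lambda>c. cs c (P::complex^'n^'m))"
  by (rule linearI) (simp_all add: cs_add_scal scaleR_conv_of_real cs_cs[symmetric] cs_of_real)

lemma bl_cs: "bounded_linear (\<lambda>c. cs c (P::complex^'n^'m))"
  using linear_cs linear_conv_bounded_linear by blast

lemma linear_ctrans: "linear (ctrans :: complex^'n^'m \<Rightarrow> complex^'m^'n)"
  by (rule linearI) (simp_all add: ctrans_add ctrans_scaleR)

lemma bl_ctrans: "bounded_linear (ctrans :: complex^'n^'m \<Rightarrow> complex^'m^'n)"
  using linear_ctrans linear_conv_bounded_linear by blast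

lemma cs_sum: "cs c (sum f S) = sum (\<lambda>x. cs c (f x)) S"
  by (simp add: vec_eq_iff sum_component sum_distrib_left)

definition Phi :: "(complex^'d^'d) list \<Rightarrow> (complex^'d^'d \<Rightarrow> 'i::finite) \<Rightarrow> real^'i \<Rightarrow> complex^'d^'d" where
  "Phi bs idx t = list_matprod (map (\<lambda>P. Rm P (cis (t $ idx P))) bs)"

lemma Phi_0: "Phi bs idx 0 = mat 1"
  unfolding Phi_def by (induction bs) (simp_all add: Rm_def)

lemma factor_deriv:
  "((\<lambda>t. Rm P (cis (t $ i))) has_derivative (\<lambda>h. cs (\<i> * of_real (h $ i)) P)) (at (0::real^'i::finite))"
proof -
  have d1: "((\<lambda>t::real^'i. t $ i) has_derivative (\<lambda>h. h $ i)) (at 0)"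
    by (rule bounded_linear_imp_has_derivative) (rule bounded_linear_vec_nth)
  have d2: "((\<lambda>t::real^'i. cis (t $ i) - 1) has_derivative (\<lambda>h. (h $ i) *\<^sub>R (\<i> * cis ((0::real^'i) $ i)) - 0)) (at 0)"
    by (intro has_derivative_diff has_derivative_cis d1 has_derivative_const)
  have d3: "((\<lambda>t::real^'i. cs (cis (t $ i) - 1) P) has_derivative (\<lambda>h. cs ((h $ i) *\<^sub>R (\<i> * cis ((0::real^'i) $ i)) - 0) P)) (at 0)"
    using bounded_linear.has_derivative[OF bl_cs d2] .
  have d4: "((\<lambda>t::real^'i. mat 1 + cs (cis (t $ i) - 1) P) has_derivative (\<lambda>h. 0 + cs ((h $ i) *\<^sub>R (\<i> * cis ((0::real^'i) $ i)) - 0) P)) (at 0)"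
    by (intro has_derivative_add has_derivative_const d3)
  show ?thesis
    unfolding Rm_def
    by (rule has_derivative_eq_rhs[OF d4]) (simp add: scaleR_conv_of_real mult.commute)
qed

lemma Phi_deriv:
  fixes idx :: "complex^'d^'d \<Rightarrow> 'i::finite"
  shows "(Phi bs idx has_derivative (\<lambda>h. \<Sum>P\<leftarrow>bs. cs (\<i> * of_real (h $ idx P)) P)) (at 0)"
proof (induction bs)
  case Nil
  then show ?case unfolding Phi_def by simp
next
  case (Cons P bs)
  have e: "Phi (P # bs) idx = (\<lambda>t. Rm P (cis (t $ idx P)) ** Phi bs idx t)"
    unfolding Phi_def by (simp add: fun_eq_iff)
  have "((\<lambda>t. Rm P (cis (t $ idx P)) ** Phi bs idx t) has_derivative
     (\<lambda>h. Rm P (cis ((0::real^'i) $ idx P)) ** (\<Sum>P\<leftarrow>bs. cs (\<i> * of_real (h $ idx P)) P) + cs (\<i> * of_real (h $ idx P)) P ** Phi bs idx 0)) (at 0)"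
    by (rule bounded_bilinear.FDERIV[OF bb_mm factor_deriv Cons.IH])
  then show ?case unfolding e
    by (rule has_derivative_eq_rhs) (simp add: Phi_0 Rm_def fun_eq_iff add.commute)
qed

lemma Phi_cont:
  fixes idx :: "complex^'d^'d \<Rightarrow> 'i::finite"
  shows "continuous_on UNIV (Phi bs idx)"
proof (induction bs)
  case Nil
  then show ?case unfolding Phi_def by simp
next
  case (Cons P bs)
  have e: "Phi (P # bs) idx = (\<lambda>t. Rm P (cis (t $ idx P)) ** Phi bs idx t)"
    unfolding Phi_def by (simp add: fun_eq_iff)
  have c1: "continuous_on UNIV (\<lambda>t::real^'i. cis (t $ idx P) - 1)"
    by (intro continuous_intros)
  have c2: "continuous_on UNIV (\<lambda>t::real^'i. Rm P (cis (t $ idx P)))"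
    unfolding Rm_def
    by (intro continuous_on_add continuous_on_const bounded_linear.continuous_on[OF bl_cs c1])
  show ?case unfolding e
    by (rule bounded_bilinear.continuous_on[OF bb_mm c2 Cons.IH])
qed


lemma l1_le_norm: "l1 (A::complex^'n^'m) \<le> real (CARD('m) * CARD('n)) * norm A"
proof -
  have e: "cmod (A $ i $ j) \<le> norm A" for i j
    using Finite_Cartesian_Product.norm_nth_le[of "A $ i" j] Finite_Cartesian_Product.norm_nth_le[of A i] by linarith
  have "l1 A \<le> (\<Sum>i\<in>(UNIV::'m set). real CARD('n) * norm A)"
    unfolding l1_def by (intro sum_mono) (rule order_trans[OF sum_bounded_above[OF e]], simp)
  also have "\<dots> = real (CARD('m) * CARD('n)) * norm A" by simp
  finally show ?thesis .
qed

lemma inG_Phi: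
  assumes u: "unitary U" and B: "set bs \<subseteq> Sset U"
  shows "inG U (Phi bs idx t)"
  unfolding Phi_def
proof (rule inG_list, intro ballI)
  fix X assume "X \<in> set (map (\<lambda>P. Rm P (cis (t $ idx P))) bs)"
  then obtain P where "P \<in> set bs" "X = Rm P (cis (t $ idx P))" by auto
  then show "inG U X" using inG_Rm_S[OF u] B by auto
qed


lemma near_id:
  fixes U :: "complex^'d^'d"
  assumes u: "unitary U" and allc: "\<And>j k. j \<noteq> k \<Longrightarrow> conn U j k"
  shows "\<exists>\<epsilon>>0. \<forall>V. unitary V \<longrightarrow> norm (V - mat 1) < \<epsilon> \<longrightarrow> inG U V"
proof -
  obtain B where B: "B \<subseteq> Sset U" "independent B" "Sset U \<subseteq> span B"
    using maximal_independent_subset[of "Sset U"] by blast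
  have finB: "finite B" and cardB: "card B \<le> DIM(complex^'d^'d)"
    using independent_bound[OF B(2)] by auto
  have spanS: "span (Sset U) \<subseteq> span B"
    using span_mono[OF B(3)] by (simp add: real_vector.span_span)
  have herm_span: "A \<in> span B" if "ctrans A = A" for A
    using herm_in_span[OF u allc that] spanS by blast
  have "card B \<le> card (UNIV :: (('d \<times> 'd) \<times> bool) set)"
    using cardB by (simp add: DIM_cart card_UNIV_bool mult.commute)
  then obtain idx :: "complex^'d^'d \<Rightarrow> ('d \<times> 'd) \<times> bool" where idx: "inj_on idx B"
    using card_le_inj[OF finB finite_class.finite_UNIV] by blast
  obtain bs where bs: "set bs = B" "distinct bs" using finite_distinct_list[OF finB] by blast
  define D where "D = (\<lambda>h::real^(('d \<times> 'd) \<times> bool). \<Sum>P\<leftarrow>bs. cs (\<i> * of_real (h $ idx P)) P)"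
  define L where "L = (\<lambda>q::(real^(('d \<times> 'd) \<times> bool)) \<times> (complex^'d^'d). (1/2::real) *\<^sub>R (snd q + ctrans (snd q)))"
  define Psi where "Psi = (\<lambda>p::(real^(('d \<times> 'd) \<times> bool)) \<times> (complex^'d^'d). Phi bs idx (fst p) + L p)"
  define Psi' where "Psi' = (\<lambda>q::(real^(('d \<times> 'd) \<times> bool)) \<times> (complex^'d^'d). D (fst q) + L q)"
  have linL: "linear L"
    unfolding L_def by (rule linearI) (simp_all add: ctrans_add ctrans_scaleR algebra_simps)
  have blL: "bounded_linear L" using linL linear_conv_bounded_linear by blast
  have dfst: "(fst has_derivative fst) (at (0::(real^(('d \<times> 'd) \<times> bool)) \<times> (complex^'d^'d)))"
    by (rule bounded_linear_imp_has_derivative) (rule bounded_linear_fst)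
  have dPhi: "((\<lambda>p. Phi bs idx (fst p)) has_derivative (\<lambda>q. D (fst q))) (at (0::(real^(('d \<times> 'd) \<times> bool)) \<times> (complex^'d^'d)))"
    using has_derivative_compose[OF dfst, of "Phi bs idx" D] Phi_deriv[of bs idx] unfolding D_def by simp
  have dPsi: "(Psi has_derivative Psi') (at 0)"
    unfolding Psi_def Psi'_def
    by (intro has_derivative_add dPhi bounded_linear_imp_has_derivative blL)
  have contPsi: "continuous_on UNIV Psi"
    unfolding Psi_def
    by (intro continuous_on_add continuous_on_compose2[OF Phi_cont continuous_on_fst] continuous_on_id
        linear_continuous_on blL) auto
  have Psi0: "Psi 0 = mat 1"
    unfolding Psi_def L_def by (simp add: Phi_0 ctrans_zero)
  have surj0: "\<exists>x. Psi' x = Z" for Z :: "complex^'d^'d"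
  proof -
    define A where "A = (1/2::real) *\<^sub>R cs (-\<i>) (Z - ctrans Z)"
    have "ctrans A = A"
      unfolding A_def by (simp add: vec_eq_iff algebra_simps)
    then have "A \<in> span B" by (rule herm_span)
    then obtain c where c: "A = (\<Sum>P\<in>B. c P *\<^sub>R P)"
      unfolding span_finite[OF finB] by blast
    define h :: "real^(('d \<times> 'd) \<times> bool)" where
      "h = (\<chi> i. if i \<in> idx ` B then c (inv_into B idx i) else 0)"
    have hP: "h $ idx P = c P" if "P \<in> B" for P
      unfolding h_def using that idx by simp
    have "D h = (\<Sum>P\<in>B. cs (\<i> * of_real (h $ idx P)) P)"
      unfolding D_def using bs by (simp add: sum_list_distinct_conv_sum_set)
    also have "\<dots> = (\<Sum>P\<in>B. cs \<i> (c P *\<^sub>R P))"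
      by (intro sum.cong refl) (simp add: hP cs_cs cs_of_real[symmetric])
    also have "\<dots> = cs \<i> A" unfolding c cs_sum ..
    finally have Dh: "D h = cs \<i> A" .
    have "Psi' (h, Z) = cs \<i> A + L (h, Z)" unfolding Psi'_def using Dh by simp
    also have "\<dots> = Z"
      unfolding A_def L_def cs_of_real[symmetric] by (simp add: vec_eq_iff algebra_simps)
    finally show "\<exists>x. Psi' x = Z" by blast
  qed
  have surj: "surj Psi'" unfolding surj_def using surj0 by metis
  have blPsi': "bounded_linear Psi'" using dPsi has_derivative_bounded_linear by blast
  obtain g where g: "linear g" "Psi' \<circ> g = id"
    using real_vector.linear_surjective_right_inverse[OF bounded_linear.linear[OF blPsi'] surj] by blast
  have blg: "bounded_linear g" using g(1) linear_conv_bounded_linear by blast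
  define N where "N = real (CARD('d) * CARD('d))"
  have Npos: "N > 0" unfolding N_def by simp
  define \<eta> where "\<eta> = 1 / (8 * N)"
  have etapos: "\<eta> > 0" unfolding \<eta>_def using Npos by simp
  obtain \<delta> where dpos: "\<delta> > 0" and dcont: "\<And>t. dist t 0 < \<delta> \<Longrightarrow> dist (Phi bs idx t) (Phi bs idx 0) < \<eta>"
    using Phi_cont[of bs idx] etapos unfolding continuous_on_iff by (meson UNIV_I)
  have "Psi 0 \<in> interior (Psi ` ball 0 \<delta>)"
    by (rule sussmann_open_mapping[OF open_UNIV contPsi UNIV_I dPsi blg g(2)]) (auto simp: dpos)
  then obtain \<epsilon> where epos: "\<epsilon> > 0" and eball: "ball (mat 1) \<epsilon> \<subseteq> Psi ` ball 0 \<delta>"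
    unfolding Psi0 mem_interior by blast
  show ?thesis
  proof (intro exI[of _ "min \<epsilon> \<eta>"] conjI allI impI)
    show "min \<epsilon> \<eta> > 0" using epos etapos by simp
  next
    fix V :: "complex^'d^'d"
    assume V: "unitary V" and Vn: "norm (V - mat 1) < min \<epsilon> \<eta>"
    have "V \<in> ball (mat 1) \<epsilon>" using Vn by (simp add: dist_norm norm_minus_commute)
    then obtain p where p: "p \<in> ball 0 \<delta>" and Vp: "V = Psi p" using eball by blast
    define t where "t = fst p"
    define K where "K = L p"
    define W where "W = Phi bs idx t"
    have "norm t < \<delta>" using p norm_fst_le[of "fst p" "snd p"] unfolding t_def by (simp add: dist_norm)
    then have Wn: "norm (W - mat 1) < \<eta>" using dcont[of t] unfolding W_def Phi_0 by (simp add: dist_norm)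
    have VWK: "V = W + K" unfolding Vp Psi_def W_def K_def t_def ..
    have Kh: "ctrans K = K" unfolding K_def L_def by (simp add: ctrans_add ctrans_scaleR algebra_simps)
    have WG: "inG U W" unfolding W_def using inG_Phi[OF u] B(1) bs(1) by blast
    have Wu: "unitary W" using inG_unitary[OF u WG] .
    have "norm K = norm ((V - mat 1) - (W - mat 1))" unfolding VWK by simp
    also have "\<dots> \<le> norm (V - mat 1) + norm (W - mat 1)" by (rule norm_triangle_ineq4)
    also have "\<dots> < \<eta> + \<eta>" using Vn Wn by simp
    finally have Kn: "norm K < 2 * \<eta>" by simp
    have "l1 K \<le> N * norm K" using l1_le_norm[of K] unfolding N_def .
    also have "\<dots> \<le> N * (2 * \<eta>)" using Kn Npos by simp
    also have "\<dots> = 1/4" unfolding \<eta>_def using Npos by simp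
    finally have Kl: "l1 K < 1/2" by simp
    have "l1 (W - mat 1) \<le> N * norm (W - mat 1)" using l1_le_norm[of "W - mat 1"] unfolding N_def .
    also have "\<dots> \<le> N * \<eta>" using Wn Npos by simp
    also have "\<dots> = 1/8" unfolding \<eta>_def using Npos by simp
    finally have Wl: "l1 (W - mat 1) < 1/4" by simp
    have "K = 0" by (rule K_trick[OF Wu _ Kh Wl Kl]) (use V VWK in simp)
    then show "inG U V" using WG VWK by simp
  qed
qed

lemma norm_le_l1m: "norm (A::complex^'n^'m) \<le> l1 A"
proof -
  have "norm A \<le> (\<Sum>i\<in>UNIV. norm (A $ i))"
    unfolding norm_vec_def by (rule L2_set_le_sum) auto
  also have "\<dots> \<le> (\<Sum>i\<in>UNIV. \<Sum>j\<in>UNIV. cmod (A $ i $ j))"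
    by (intro sum_mono) (simp add: norm_vec_def L2_set_le_sum)
  finally show ?thesis unfolding l1_def .
qed

lemma l1_cs: "l1 (cs c A) = cmod c * l1 A"
  unfolding l1_def by (simp add: norm_mult sum_distrib_left)

lemma Rm_mult: "P ** P = P \<Longrightarrow> Rm P a ** Rm P b = Rm P (a * b)"
  unfolding Rm_def
  by (simp add: matrix_add_ldistrib matrix_add_rdistrib cs_mult_left cs_mult_right cs_cs
      cs_add_scal[symmetric] add.assoc[symmetric]) (simp add: vec_eq_iff algebra_simps)

lemma Rm_one[simp]: "Rm P 1 = mat 1"
  by (simp add: Rm_def)

lemma Rm_unitary:
  assumes h: "ctrans P = P" and idem: "P ** P = P" and z: "cmod z = 1"
  shows "unitary (Rm P z)"
  unfolding unitary_def ctrans_Rm[OF h] Rm_mult[OF idem]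
  using cnj_mult_unit[OF z] mult_cnj_unit[OF z] by simp

lemma Rm_pow: "P ** P = P \<Longrightarrow> list_matprod (replicate n (Rm P z)) = Rm P (z ^ n)"
  by (induction n) (simp_all add: Rm_mult)

lemma rm_in_G:
  assumes near: "\<exists>\<epsilon>>0. \<forall>V. unitary V \<longrightarrow> norm (V - mat 1) < \<epsilon> \<longrightarrow> inG U V"
    and h: "ctrans P = P" and idem: "P ** P = P" and z: "cmod z = 1"
  shows "inG U (Rm P z)"
proof -
  obtain \<epsilon> where epos: "\<epsilon> > 0" and eV: "\<And>V. unitary V \<Longrightarrow> norm (V - mat 1) < \<epsilon> \<Longrightarrow> inG U V"
    using near by blast
  define \<theta> where "\<theta> = Arg z"
  have "z \<noteq> 0" using z by auto
  then have zc: "z = cis \<theta>" unfolding \<theta>_def using z cis_Arg[of z] by (simp add: sgn_eq)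
  define e' where "e' = \<epsilon> / (l1 P + 1)"
  have e'pos: "e' > 0" unfolding e'_def using epos l1_nonneg[of P] by simp
  have "isCont cis 0" using continuous_on_cis[of UNIV "\<lambda>x. x"] continuous_on_id
    by (simp add: continuous_on_eq_continuous_at)
  then obtain d where dpos: "d > 0" and dc: "\<And>x. dist x 0 < d \<Longrightarrow> dist (cis x) (cis 0) < e'"
    unfolding continuous_at_eps_delta using e'pos by blast
  obtain n :: nat where n: "\<bar>\<theta>\<bar> / d < real n" using reals_Archimedean2 by blast
  have "0 \<le> \<bar>\<theta>\<bar> / d" using dpos by simp
  then have npos: "n > 0" using n by (cases n) auto
  have "\<bar>\<theta> / real n\<bar> < d"
    using n npos dpos by (simp add: field_simps abs_divide)
  then have cn: "cmod (cis (\<theta> / real n) - 1) < e'" using dc[of "\<theta> / real n"] by (simp add: dist_norm)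
  define w where "w = cis (\<theta> / real n)"
  have wu: "cmod w = 1" unfolding w_def by simp
  have "norm (Rm P w - mat 1) \<le> l1 (Rm P w - mat 1)" by (rule norm_le_l1m)
  also have "\<dots> = cmod (w - 1) * l1 P" unfolding Rm_def by (simp add: l1_cs)
  also have "\<dots> \<le> e' * l1 P" using cn l1_nonneg[of P] unfolding w_def by (simp add: mult_right_mono)
  also have "\<dots> < \<epsilon>"
  proof -
    have "e' * l1 P < e' * (l1 P + 1)" using e'pos by simp
    also have "\<dots> = \<epsilon>" unfolding e'_def using l1_nonneg[of P] by simp
    finally show ?thesis .
  qed
  finally have "inG U (Rm P w)" using eV Rm_unitary[OF h idem wu] by blast
  then have "inG U (list_matprod (replicate n (Rm P w)))" by (intro inG_list) auto
  moreover have "w ^ n = z" unfolding w_def zc using Complex.DeMoivre[of "\<theta> / real n" n] npos by simp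
  ultimately show ?thesis using Rm_pow[OF idem] by simp
qed


definition ip :: "complex^'d \<Rightarrow> complex^'d \<Rightarrow> complex" where
  "ip x y = (\<Sum>a\<in>UNIV. cnj (x $ a) * y $ a)"

definition projn :: "complex^'d \<Rightarrow> complex^'d^'d" where
  "projn y = (\<chi> a b. y $ a * cnj (y $ b) / ip y y)"

definition ev :: "'d \<Rightarrow> complex^'d" where
  "ev j = (\<chi> a. if a = j then 1 else 0)"

definition col :: "complex^'d^'d \<Rightarrow> 'd \<Rightarrow> complex^'d" where
  "col V i = (\<chi> a. V $ a $ i)"

definition good :: "complex^'d^'d \<Rightarrow> 'd \<Rightarrow> bool" where
  "good V i \<longleftrightarrow> col V i = ev i"

lemma ev_nth[simp]: "ev j $ a = (if a = j then 1 else 0)"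
  by (simp add: ev_def)

lemma col_nth[simp]: "col V i $ a = V $ a $ i"
  by (simp add: col_def)

lemma mv_nth: "(A *v x) $ a = (\<Sum>c\<in>UNIV. A $ a $ c * x $ c)"
  by (simp add: matrix_vector_mult_def)

lemma cnj_ip: "cnj (ip x y) = ip y x"
  unfolding ip_def by (simp add: mult.commute)

lemma ip_self_real: "cnj (ip y y) = ip y y"
  by (rule cnj_ip)

lemma cnj_z_z: "cnj z * z = complex_of_real ((cmod z)^2)"
  using complex_norm_square[of z] by (simp add: mult.commute)

lemma ip_self_eq: "ip y y = of_real (\<Sum>a\<in>UNIV. (cmod (y $ a))^2)"
  unfolding ip_def of_real_sum by (intro sum.cong refl) (rule cnj_z_z)

lemma ip_self_nz: "y \<noteq> 0 \<Longrightarrow> ip y y \<noteq> 0"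
proof -
  assume "y \<noteq> 0"
  then obtain a where a: "y $ a \<noteq> 0" by (auto simp: vec_eq_iff)
  have "0 < (cmod (y $ a))^2" using a by simp
  also have "\<dots> \<le> (\<Sum>a\<in>UNIV. (cmod (y $ a))^2)" by (rule member_le_sum) auto
  finally have "(\<Sum>a\<in>UNIV. (cmod (y $ a))^2) \<noteq> 0" by simp
  then show ?thesis unfolding ip_self_eq of_real_eq_0_iff .
qed

lemma ip_diff_left: "ip (x - y) w = ip x w - ip y w"
  unfolding ip_def by (simp add: algebra_simps sum_subtractf)

lemma ip_smult_left: "ip (c *s x) w = cnj c * ip x w"
  unfolding ip_def by (simp add: sum_distrib_left mult.assoc)

lemma ip_diff_right: "ip w (x - y) = ip w x - ip w y"
  unfolding ip_def by (simp add: algebra_simps sum_subtractf)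

lemma ip_smult_right: "ip w (c *s x) = c * ip w x"
  unfolding ip_def by (simp add: sum_distrib_left algebra_simps)

lemma ip_ev_left: "ip (ev j) w = w $ j"
proof -
  have "ip (ev j) w = (\<Sum>a\<in>UNIV. (if a = j then 1 else 0) * w $ a)"
    unfolding ip_def by (intro sum.cong) auto
  then show ?thesis using sum_if_mult[of j 1 "\<lambda>a. w $ a"] by simp
qed

lemma ip_ev_right: "ip w (ev j) = cnj (w $ j)"
  using ip_ev_left[of j w] cnj_ip[of "ev j" w] by simp

lemma projn_herm: "ctrans (projn y) = projn y"
  unfolding projn_def by (simp add: vec_eq_iff ip_self_real mult.commute)

lemma projn_idem: assumes y: "y \<noteq> 0" shows "projn y ** projn y = projn y"
proof -
  have s: "ip y y \<noteq> 0" using ip_self_nz[OF y] .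
  show ?thesis
  proof (unfold vec_eq_iff, intro allI)
    fix a b
    have "(projn y ** projn y) $ a $ b = (\<Sum>c\<in>UNIV. (y $ a * cnj (y $ b) / (ip y y * ip y y)) * (cnj (y $ c) * y $ c))"
      unfolding mm_nth projn_def by (intro sum.cong refl) (simp add: field_simps)
    also have "\<dots> = (y $ a * cnj (y $ b) / (ip y y * ip y y)) * ip y y"
      unfolding ip_def by (simp add: sum_distrib_left)
    also have "\<dots> = projn y $ a $ b" unfolding projn_def using s by (simp add: field_simps)
    finally show "(projn y ** projn y) $ a $ b = projn y $ a $ b" .
  qed
qed

lemma cs_mv: "(cs c P *v x) $ a = c * (P *v x) $ a"
  unfolding mv_nth by (simp add: sum_distrib_left mult.assoc)

lemma projn_mv: "(projn y *v x) $ a = (ip y x / ip y y) * y $ a"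
proof -
  have "(projn y *v x) $ a = (\<Sum>c\<in>UNIV. (y $ a / ip y y) * (cnj (y $ c) * x $ c))"
    unfolding mv_nth projn_def by (intro sum.cong refl) (simp add: field_simps)
  also have "\<dots> = (ip y x / ip y y) * y $ a"
    unfolding ip_def sum_distrib_left[symmetric] by simp
  finally show ?thesis .
qed

lemma Rm_mv: "Rm P z *v x = x + cs (z - 1) P *v x"
  unfolding Rm_def by (simp add: matrix_vector_mult_add_rdistrib)

lemma Rm_projn_mv: "Rm (projn y) z *v x = x + ((z - 1) * ip y x / ip y y) *s y"
  unfolding Rm_mv by (simp add: vec_eq_iff cs_mv projn_mv)

lemma diagm_mv: "(diagm f *v x) $ a = f a * x $ a"
  unfolding mv_nth diagm_def using sum_if_eq1[of a "\<lambda>_. f a" "\<lambda>c. x $ c"] by simp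

lemma Rm_Emat_mv: "(Rm (Emat j j) c *v x) $ a = (if a = j then c * x $ a else x $ a)"
  unfolding Rm_Emat diagm_mv by simp

lemma col_mult: "col (R ** V) i = R *v col V i"
  by (simp add: vec_eq_iff mm_nth mv_nth)

lemma ip_col: "ip (col V i) (col V j) = (ctrans V ** V) $ i $ j"
  unfolding ip_def mm_nth by simp


lemma hh_step:
  assumes near: "\<exists>\<epsilon>>0. \<forall>V. unitary V \<longrightarrow> norm (V - mat 1) < \<epsilon> \<longrightarrow> inG U V"
    and V: "unitary V" and bad: "\<not> good V j"
  shows "\<exists>R. inG U R \<and> good (R ** V) j \<and> (\<forall>i. good V i \<longrightarrow> good (R ** V) i)"
proof -
  define x where "x = col V j"
  have ipV: "ip (col V i) (col V k) = (if i = k then 1 else 0)" for i k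
    using ip_col[of V i k] unitary_D(1)[OF V] by (simp add: mat_nth)
  have xx: "ip x x = 1" using ipV[of j j] unfolding x_def by simp
  have xgood: "x $ i = 0" if "good V i" for i
  proof -
    have ij: "i \<noteq> j" using that bad by auto
    have "ip (col V i) x = 0" using ipV[of i j] ij unfolding x_def by simp
    moreover have "col V i = ev i" using that unfolding good_def by blast
    ultimately show ?thesis by (simp add: ip_ev_left)
  qed
  define \<mu> where "\<mu> = (if x $ j = 0 then 1 else x $ j / of_real (cmod (x $ j)))"
  have mu1: "cmod \<mu> = 1" by (simp add: \<mu>_def norm_divide)
  have mur: "cnj \<mu> * x $ j = of_real (cmod (x $ j))"
  proof (cases "x $ j = 0")
    case True then show ?thesis by (simp add: \<mu>_def)
  next
    case False
    have "cnj \<mu> * x $ j = (cnj (x $ j) * x $ j) / of_real (cmod (x $ j))"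
      using False by (simp add: \<mu>_def)
    also have "\<dots> = of_real ((cmod (x $ j))^2) / of_real (cmod (x $ j))" unfolding cnj_z_z ..
    also have "\<dots> = of_real (cmod (x $ j))" using False by (simp add: power2_eq_square)
    finally show ?thesis .
  qed
  have mur2: "\<mu> * cnj (x $ j) = of_real (cmod (x $ j))"
    using arg_cong[OF mur, of cnj] by simp
  obtain H where H: "inG U H" "H *v x = \<mu> *s ev j" "\<And>i. good V i \<Longrightarrow> H *v ev i = ev i"
  proof (cases "x - \<mu> *s ev j = 0")
    case True
    then have xe: "x = \<mu> *s ev j" by simp
    show ?thesis by (rule that[of "mat 1"]) (simp_all add: inG_one xe)
  next
    case False
    define y where "y = x - \<mu> *s ev j"
    have ynz: "y \<noteq> 0" using False y_def by simp
    have s: "ip y y \<noteq> 0" by (rule ip_self_nz[OF ynz])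
    have yx: "ip y x = 1 - of_real (cmod (x $ j))"
      unfolding y_def ip_diff_left ip_smult_left ip_ev_left xx mur ..
    have xy: "ip x y = 1 - of_real (cmod (x $ j))"
      unfolding y_def ip_diff_right ip_smult_right ip_ev_right xx mur2 ..
    have "ip y y = ip x y - cnj \<mu> * ip (ev j) y"
      unfolding y_def ip_diff_left ip_smult_left ..
    also have "ip (ev j) y = x $ j - \<mu>" unfolding ip_ev_left y_def by simp
    finally have "ip y y = ip x y - cnj \<mu> * x $ j + cnj \<mu> * \<mu>" by (simp add: algebra_simps)
    then have yy: "ip y y = 2 * ip y x" unfolding xy yx mur cnj_mult_unit[OF mu1] by simp
    have yxnz: "ip y x \<noteq> 0" using s yy by auto
    define H where "H = Rm (projn y) (-1)"
    have Hin: "inG U H" unfolding H_def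
      by (rule rm_in_G[OF near projn_herm projn_idem[OF ynz]]) simp
    have "((-1 - 1) * ip y x / ip y y) = -1" unfolding yy using yxnz by simp
    then have Hx: "H *v x = \<mu> *s ev j"
      unfolding H_def Rm_projn_mv by (simp add: y_def)
    have Hg: "H *v ev i = ev i" if "good V i" for i
    proof -
      have ij: "i \<noteq> j" using that bad by auto
      have "ip y (ev i) = 0" unfolding ip_ev_right y_def using xgood[OF that] ij by simp
      then show ?thesis unfolding H_def Rm_projn_mv by simp
    qed
    show ?thesis using that Hin Hx Hg by blast
  qed
  define R where "R = Rm (Emat j j) (cnj \<mu>) ** H"
  have "diag_unitary (Rm (Emat j j) (cnj \<mu>))" by (rule diag_Rm_Emat) (simp add: mu1)
  then have "inG U (Rm (Emat j j) (cnj \<mu>))" by (intro inG_gen) (simp add: gen_def)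
  then have Rin: "inG U R" unfolding R_def using H(1) by (rule inG_mult)
  have E1: "Rm (Emat j j) (cnj \<mu>) *v (\<mu> *s ev j) = ev j"
    by (simp add: vec_eq_iff Rm_Emat_mv cnj_mult_unit[OF mu1])
  have E2: "Rm (Emat j j) (cnj \<mu>) *v ev i = ev i" if "i \<noteq> j" for i
    using that by (simp add: vec_eq_iff Rm_Emat_mv)
  have gj: "good (R ** V) j"
    unfolding good_def col_mult R_def matrix_vector_mul_assoc[symmetric] x_def[symmetric] H(2) E1 ..
  have gi: "good (R ** V) i" if "good V i" for i
  proof -
    have ij: "i \<noteq> j" using that bad by auto
    have "col V i = ev i" using that unfolding good_def by blast
    then show ?thesis
      unfolding good_def col_mult R_def matrix_vector_mul_assoc[symmetric] using H(3)[OF that] E2[OF ij] by simp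
  qed
  show ?thesis using Rin gj gi by blast
qed

lemma all_inG:
  assumes u: "unitary U" and near: "\<exists>\<epsilon>>0. \<forall>V. unitary V \<longrightarrow> norm (V - mat 1) < \<epsilon> \<longrightarrow> inG U V"
  shows "unitary V \<Longrightarrow> inG U V"
proof (induction "card {i. \<not> good V i}" arbitrary: V rule: less_induct)
  case less
  show ?case
  proof (cases "\<exists>j. \<not> good V j")
    case False
    have "V = mat 1"
    proof (unfold vec_eq_iff, intro allI)
      fix a i
      have "col V i = ev i" using False unfolding good_def by blast
      then have "col V i $ a = ev i $ a" by simp
      then show "V $ a $ i = mat 1 $ a $ i" by (simp add: mat_nth)
    qed
    then show ?thesis by (simp add: inG_one)
  next
    case True
    then obtain j where j: "\<not> good V j" by blast
    obtain R where R: "inG U R" "good (R ** V) j" "\<And>i. good V i \<Longrightarrow> good (R ** V) i"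
      using hh_step[OF near less.prems j] by blast
    have Ru: "unitary R" using inG_unitary[OF u R(1)] .
    have V'u: "unitary (R ** V)" by (rule unitary_mult[OF Ru less.prems])
    have sub: "{i. \<not> good (R ** V) i} \<subset> {i. \<not> good V i}"
      using R(2,3) j by blast
    have "card {i. \<not> good (R ** V) i} < card {i. \<not> good V i}"
      by (rule psubset_card_mono[OF _ sub]) simp
    then have IH: "inG U (R ** V)" using less.hyps V'u by blast
    have "V = ctrans R ** (R ** V)"
      using unitary_D(1)[OF Ru] by (simp add: matrix_mul_assoc)
    then show ?thesis using inG_mult[OF inG_ctrans[OF u R(1)] IH] by simp
  qed
qed

theorem theorem10:
  fixes U :: "complex ^'d ^'d"
  assumes "CARD('d) \<ge> 2"
    and "unitary U"
    and "\<exists>M::nat. \<forall>i j. matpow (transpose (pattern U) ** pattern U) M $ i $ j \<noteq> 0"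
  shows "\<forall>V :: complex ^'d ^'d. unitary V \<longrightarrow>
           (\<exists>Ms. (\<forall>X\<in>set Ms. diag_unitary X \<or> (\<exists>D. diag_unitary D \<and> X = ctrans U ** D ** U))
                 \<and> V = list_matprod Ms)"
proof (intro allI impI)
  fix V :: "complex ^'d ^'d"
  assume V: "unitary V"
  have u: "unitary U" by (rule assms(2))
  obtain M where M: "\<And>i j. matpow (transpose (pattern U) ** pattern U) M $ i $ j \<noteq> 0"
    using assms(3) by blast
  have allc: "conn U j k" if "j \<noteq> k" for j k
    using matpow_conn[OF u M[of j k]] that by blast
  have near: "\<exists>\<epsilon>>0. \<forall>V. unitary V \<longrightarrow> norm (V - mat 1) < \<epsilon> \<longrightarrow> inG U V"
    by (rule near_id[OF u allc])
  have "inG U V" by (rule all_inG[OF u near V])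
  then show "\<exists>Ms. (\<forall>X\<in>set Ms. diag_unitary X \<or> (\<exists>D. diag_unitary D \<and> X = ctrans U ** D ** U))
                 \<and> V = list_matprod Ms"
    unfolding inG_def gen_def .
qed

end
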